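(* Let $t\ge0$ and $b\in\mathcal B_{[2t]}$. Then $b^e\in\mathcal B_{[2t]}$, and: (i) $Q_1(b)=Q_1(b^e)$; (ii) $Q_1\big(Q_1(b)^e\big)=b+b^e$; (iii) $P\big(Q_1(b)^e\big)=Q_1(b)$; (iv) $P(b)=0=P(b^e)$; (v) $Q_1\big(Q_1(b\,x_{2t+1})^e\big)=Q_1(b\,x_{2t+1})$; (vi) $P\big(Q_1(b\,x_{2t+1})\big)=0$; (vii) $P\big(Q_1(b\,x_{2t+1})^e\big)=0$.
   Context: Over $\mathbb F_2$, $R=\Lambda(t_i:i\ge1)\otimes\Lambda(x_i:i\ge1)$ with basis the monomials $t_Ix_J$ ($I,J\subset\mathbb N_+$ finite, $t_I=\prod_{i\in I}t_i$, $x_J=\prod_{j\in J}x_j$, $t_It_K=0$ if $I\cap K\neq\emptyset$), with linear operators $Q_1(t_Ix_J)=\sum_{j\in J}t_jt_Ix_{J\setminus\{j\}}$ and $P(t_Ix_J)=\sum_{K\subseteq J,|K|=2}t_Kt_Ix_{J\setminus K}$. The exchange operation is the linear map $(-)^e:R\to R$, $(t_Ix_J)^e=t_Jx_I$ (interchanging $t_i$ and $x_i$). The sets $\mathcal B_{[n]}\subset R$ are defined inductively: $\mathcal B_{[0]}=\{1\}$; given $\mathcal B_{[2t]}$, $\mathcal B_{[2t+1]}=\{Q_1(b\,x_{2t+1}):b\in\mathcal B_{[2t]}\}\cup\{Q_1(b\,x_{2t+1})^e:b\in\mathcal B_{[2t]}\}$ and $\mathcal B_{[2t+2]}=\{Q_1(b\,x_{2t+1})\,x_{2t+2}:b\in\mathcal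 B_{[2t]}\}\cup\{Q_1(b\,x_{2t+1})^e\,t_{2t+2}:b\in\mathcal B_{[2t]}\}$ (products taken in $R$). *)

theory Defs
  imports Main
begin

text \<open>Elements of R = Lambda(t_i) (x) Lambda(x_i) over F_2.
  A monomial t_I x_J is the pair (I, J) of finite sets of positive naturals.
  An element of R is represented by the finite set of monomials occurring with
  coefficient 1; addition is symmetric difference, 0 is the empty set.\<close>

type_synonym mon = "nat set \<times> nat set"
type_synonym relt = "mon set"

definition lsum :: "('a \<Rightarrow> relt) \<Rightarrow> 'a set \<Rightarrow> relt" where
  "lsum F A = {m. odd (card {a \<in> A. m \<in> F a})}"

definition radd :: "relt \<Rightarrow> relt \<Rightarrow> relt" where
  "radd a b = (a - b) \<union> (b - a)"

definition lin :: "(mon \<Rightarrow> relt) \<Rightarrow> relt \<Rightarrow> relt" where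
  "lin f v = lsum f v"

text \<open>Product of monomials (exterior in both families of generators; signs vanish over F_2).\<close>
definition mmul :: "mon \<Rightarrow> mon \<Rightarrow> relt" where
  "mmul m n = (if fst m \<inter> fst n = {} \<and> snd m \<inter> snd n = {}
               then {(fst m \<union> fst n, snd m \<union> snd n)} else {})"

definition rmul :: "relt \<Rightarrow> relt \<Rightarrow> relt" where
  "rmul a b = lsum (\<lambda>(m, n). mmul m n) (a \<times> b)"

definition tg :: "nat \<Rightarrow> relt" where "tg i = {({i}, {})}"
definition xg :: "nat \<Rightarrow> relt" where "xg i = {({}, {i})}"
definition rone :: relt where "rone = {({}, {})}"

definition Q1m :: "mon \<Rightarrow> relt" where
  "Q1m m = lsum (\<lambda>j. mmul ({j}, {}) (fst m, snd m - {j})) (snd m)"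
definition Q1 :: "relt \<Rightarrow> relt" where "Q1 = lin Q1m"

definition Pm :: "mon \<Rightarrow> relt" where
  "Pm m = lsum (\<lambda>K. mmul (K, {}) (fst m, snd m - K)) {K. K \<subseteq> snd m \<and> card K = 2}"
definition Pop :: "relt \<Rightarrow> relt" where "Pop = lin Pm"

definition exm :: "mon \<Rightarrow> relt" where "exm m = {(snd m, fst m)}"
definition exch :: "relt \<Rightarrow> relt" where "exch = lin exm"

fun Bev :: "nat \<Rightarrow> relt set" where
  "Bev 0 = {rone}"
| "Bev (Suc t) =
     {rmul (Q1 (rmul b (xg (2*t+1)))) (xg (2*t+2)) | b. b \<in> Bev t} \<union>
     {rmul (exch (Q1 (rmul b (xg (2*t+1))))) (tg (2*t+2)) | b. b \<in> Bev t}"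

definition Bodd :: "nat \<Rightarrow> relt set" where
  "Bodd t = {Q1 (rmul b (xg (2*t+1))) | b. b \<in> Bev t} \<union>
            {exch (Q1 (rmul b (xg (2*t+1)))) | b. b \<in> Bev t}"

definition B :: "nat \<Rightarrow> relt set" where
  "B n = (if even n then Bev (n div 2) else Bodd (n div 2))"

end

theory Submission imports Defs "HOL-Library.Z2" begin


definition ind :: "relt \<Rightarrow> mon \<Rightarrow> bit" where "ind v m = (if m \<in> v then 1 else 0)"

lemma of_nat_bit: "(of_nat n :: bit) = (if odd n then 1 else 0)"
  by (induction n) auto

lemma ind_eqI: "(\<And>m. ind a m = ind b m) \<Longrightarrow> a = b"
  unfolding ind_def by (metis (full_types) one_neq_zero subsetI subset_antisym)

lemma ind_radd: "ind (radd a b) m = ind a m + ind b m"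
  unfolding ind_def radd_def by auto

lemma lsum_ind: assumes "finite A" shows "ind (lsum F A) m = (\<Sum>a\<in>A. ind (F a) m)"
proof -
  have "(\<Sum>a\<in>A. ind (F a) m) = (\<Sum>a\<in>A. if m \<in> F a then 1 else 0)"
    unfolding ind_def by (rule refl)
  also have "\<dots> = (\<Sum>a\<in>{a\<in>A. m \<in> F a}. 1)"
    by (simp only: sum.inter_filter[OF assms])
  also have "\<dots> = of_nat (card {a\<in>A. m \<in> F a})" by simp
  also have "\<dots> = ind (lsum F A) m" unfolding of_nat_bit ind_def lsum_def by simp
  finally show ?thesis by simp
qed

lemma sum_ind_mult: assumes "finite U" "S \<subseteq> U" shows "(\<Sum>a\<in>U. ind S a * f a) = (\<Sum>a\<in>S. f a)"
proof -
  have "(\<Sum>a\<in>U. ind S a * f a) = (\<Sum>a\<in>U. if a \<in> S then f a else 0)"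
    unfolding ind_def by (rule sum.cong) auto
  also have "\<dots> = (\<Sum>a\<in>S. f a)" using assms by (simp add: sum.If_cases Int_absorb1)
  finally show ?thesis .
qed

lemma lsum_subset: "lsum F A \<subseteq> \<Union> (F ` A)"
proof
  fix m assume "m \<in> lsum F A"
  then have "card {a\<in>A. m \<in> F a} \<noteq> 0" unfolding lsum_def by (auto elim: oddE)
  then obtain a where "a \<in> A" "m \<in> F a" by (metis (mono_tags, lifting) Collect_empty_eq card.empty)
  then show "m \<in> \<Union> (F ` A)" by blast
qed

lemma lsum_finite: "finite A \<Longrightarrow> (\<And>a. a \<in> A \<Longrightarrow> finite (F a)) \<Longrightarrow> finite (lsum F A)"
  by (meson finite_UN_I finite_subset lsum_subset)

lemma lsum_comp:
  assumes "finite v" "\<And>w. w \<in> v \<Longrightarrow> finite (G w)"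
  shows "lsum F (lsum G v) = lsum (\<lambda>w. lsum F (G w)) v"
proof (rule ind_eqI)
  fix m
  define U where "U = \<Union> (G ` v)"
  have fU: "finite U" using assms unfolding U_def by auto
  have sub: "lsum G v \<subseteq> U" unfolding U_def by (rule lsum_subset)
  have fl: "finite (lsum G v)" using fU sub finite_subset by blast
  have "ind (lsum F (lsum G v)) m = (\<Sum>a\<in>lsum G v. ind (F a) m)" using fl by (rule lsum_ind)
  also have "\<dots> = (\<Sum>a\<in>U. ind (lsum G v) a * ind (F a) m)" using sum_ind_mult[OF fU sub] by simp
  also have "\<dots> = (\<Sum>a\<in>U. (\<Sum>w\<in>v. ind (G w) a) * ind (F a) m)"
    using lsum_ind[OF assms(1)] by simp
  also have "\<dots> = (\<Sum>a\<in>U. \<Sum>w\<in>v. ind (G w) a * ind (F a) m)" by (simp only: sum_distrib_right)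
  also have "\<dots> = (\<Sum>w\<in>v. \<Sum>a\<in>U. ind (G w) a * ind (F a) m)" by (rule sum.swap)
  also have "\<dots> = (\<Sum>w\<in>v. \<Sum>a\<in>G w. ind (F a) m)"
    by (rule sum.cong[OF refl], rule sum_ind_mult[OF fU]) (auto simp: U_def)
  also have "\<dots> = (\<Sum>w\<in>v. ind (lsum F (G w)) m)"
    by (rule sum.cong[OF refl]) (simp add: lsum_ind assms)
  also have "\<dots> = ind (lsum (\<lambda>w. lsum F (G w)) v) m" by (simp add: lsum_ind assms)
  finally show "ind (lsum F (lsum G v)) m = ind (lsum (\<lambda>w. lsum F (G w)) v) m" .
qed

lemma lsum_radd_fun: "finite v \<Longrightarrow> lsum (\<lambda>w. radd (F w) (G w)) v = radd (lsum F v) (lsum G v)"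
  by (rule ind_eqI) (simp only: lsum_ind ind_radd sum.distrib)

lemma lsum_radd_arg: assumes "finite a" "finite b"
  shows "lsum F (radd a b) = radd (lsum F a) (lsum F b)"
proof (rule ind_eqI)
  fix m
  have fr: "finite (radd a b)" using assms unfolding radd_def by auto
  have U: "finite (a \<union> b)" using assms by auto
  have s: "radd a b \<subseteq> a \<union> b" unfolding radd_def by auto
  have "ind (lsum F (radd a b)) m = (\<Sum>w\<in>a\<union>b. ind (radd a b) w * ind (F w) m)"
    by (simp only: lsum_ind[OF fr] sum_ind_mult[OF U s])
  also have "\<dots> = (\<Sum>w\<in>a\<union>b. ind a w * ind (F w) m + ind b w * ind (F w) m)"
    by (simp only: ind_radd distrib_right)
  also have "\<dots> = (\<Sum>w\<in>a\<union>b. ind a w * ind (F w) m) + (\<Sum>w\<in>a\<union>b. ind b w * ind (F w) m)"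
    by (rule sum.distrib)
  also have "\<dots> = ind (radd (lsum F a) (lsum F b)) m"
    by (simp only: ind_radd lsum_ind assms sum_ind_mult[OF U] Un_upper1 Un_upper2)
  finally show "ind (lsum F (radd a b)) m = ind (radd (lsum F a) (lsum F b)) m" .
qed

lemma lsum_empty[simp]: "lsum F {} = {}" unfolding lsum_def by simp

lemma lsum_sing[simp]: "lsum F {w} = F w"
proof -
  have "\<And>m. {a\<in>{w}. m \<in> F a} = (if m \<in> F w then {w} else {})" by auto
  then show ?thesis unfolding lsum_def by auto
qed

lemma lsum_single:
  assumes "inj_on h {a\<in>A. P a}"
  shows "lsum (\<lambda>a. if P a then {h a} else {}) A = h ` {a\<in>A. P a}"
proof (rule set_eqI)
  fix m
  have e: "{a\<in>A. m \<in> (if P a then {h a} else {})} = {a\<in>A. P a \<and> h a = m}" by auto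
  show "m \<in> lsum (\<lambda>a. if P a then {h a} else {}) A \<longleftrightarrow> m \<in> h ` {a\<in>A. P a}"
  proof (cases "m \<in> h ` {a\<in>A. P a}")
    case True
    then obtain a0 where a0: "a0 \<in> A" "P a0" "h a0 = m" by auto
    have "{a\<in>A. P a \<and> h a = m} = {a0}" using a0 assms unfolding inj_on_def by auto
    then show ?thesis using True unfolding lsum_def by (simp only: e mem_Collect_eq) simp
  next
    case False
    then have "{a\<in>A. P a \<and> h a = m} = {}" by auto
    then show ?thesis using False unfolding lsum_def by (simp only: e mem_Collect_eq) simp
  qed
qed

lemma lsum_image: assumes "inj_on h D" shows "lsum F (h ` D) = lsum (\<lambda>d. F (h d)) D"
proof -
  have "\<And>m. {a\<in>h ` D. m \<in> F a} = h ` {d\<in>D. m \<in> F (h d)}" by auto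
  moreover have "\<And>m. card (h ` {d\<in>D. m \<in> F (h d)}) = card {d\<in>D. m \<in> F (h d)}"
    by (rule card_image) (rule inj_on_subset[OF assms], auto)
  ultimately show ?thesis unfolding lsum_def by simp
qed



definition MXm :: "nat \<Rightarrow> mon \<Rightarrow> relt" where "MXm i w = mmul w ({},{i})"
definition MTm :: "nat \<Rightarrow> mon \<Rightarrow> relt" where "MTm i w = mmul w ({i},{})"

lemma MXm_eq: "MXm i (I,J) = (if i \<in> J then {} else {(I, insert i J)})"
  unfolding MXm_def mmul_def by auto
lemma MTm_eq: "MTm i (I,J) = (if i \<in> I then {} else {(insert i I, J)})"
  unfolding MTm_def mmul_def by auto

lemma lsum_cong: "(\<And>a. a \<in> A \<Longrightarrow> F a = G a) \<Longrightarrow> lsum F A = lsum G A"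
proof -
  assume a: "\<And>a. a \<in> A \<Longrightarrow> F a = G a"
  have "\<And>m. {a\<in>A. m \<in> F a} = {a\<in>A. m \<in> G a}" using a by auto
  then show ?thesis unfolding lsum_def by simp
qed

lemma lsum_singleI:
  assumes "\<And>a. a\<in>A \<Longrightarrow> F a = (if P a then {h a} else {})" "inj_on h {a\<in>A. P a}"
  shows "lsum F A = h ` {a\<in>A. P a}"
proof -
  have "lsum F A = lsum (\<lambda>a. if P a then {h a} else {}) A" by (rule lsum_cong) (simp add: assms)
  then show ?thesis by (simp add: lsum_single assms(2))
qed

lemma Q1m_eq: "Q1m (I,J) = (\<lambda>j. (insert j I, J - {j})) ` {j\<in>J. j \<notin> I}"
  unfolding Q1m_def fst_conv snd_conv
  by (rule lsum_singleI[where P="\<lambda>j. j \<notin> I"]) (auto simp: mmul_def inj_on_def)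

lemma diff_inj: "K \<subseteq> J \<Longrightarrow> K' \<subseteq> J \<Longrightarrow> J - K = J - K' \<Longrightarrow> K = K'" by blast

lemma inj2: "inj_on (\<lambda>K. (K \<union> I, J - K)) {K\<in>{K. K \<subseteq> J \<and> card K = 2}. K \<inter> I = {}}"
proof (rule inj_onI)
  fix K K' assume "K \<in> {K\<in>{K. K \<subseteq> J \<and> card K = 2}. K \<inter> I = {}}"
     "K' \<in> {K\<in>{K. K \<subseteq> J \<and> card K = 2}. K \<inter> I = {}}"
     "(K \<union> I, J - K) = (K' \<union> I, J - K')"
  then have "K \<subseteq> J" "K' \<subseteq> J" "J - K = J - K'" by auto
  then show "K = K'" by (rule diff_inj)
qed

lemma Pm_eq: "Pm (I,J) = (\<lambda>K. (K \<union> I, J - K)) ` {K\<in>{K. K \<subseteq> J \<and> card K = 2}. K \<inter> I = {}}"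
  unfolding Pm_def fst_conv snd_conv
proof (rule lsum_singleI[where P="\<lambda>K. K \<inter> I = {}"])
  fix K show "mmul (K, {}) (I, J - K) = (if K \<inter> I = {} then {(K \<union> I, J - K)} else {})"
    unfolding mmul_def by simp
qed (rule inj2)

lemma inj1: "inj_on (\<lambda>j. (insert j I, J - {j})) {j\<in>J. j \<notin> I}"
  by (auto simp: inj_on_def)

lemma X_Q1: "lsum (MXm i) (Q1m (I,J)) = (\<lambda>j. (insert j I, insert i (J-{j}))) ` {j\<in>{j\<in>J. j \<notin> I}. i \<notin> J - {j}}"
  unfolding Q1m_eq lsum_image[OF inj1]
  by (rule lsum_singleI[where P="\<lambda>j. i \<notin> J - {j}"]) (auto simp: MXm_eq inj_on_def)

lemma T_Q1: "lsum (MTm i) (Q1m (I,J)) = (\<lambda>j. (insert i (insert j I), J-{j})) ` {j\<in>{j\<in>J. j \<notin> I}. i \<notin> insert j I}"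
  unfolding Q1m_eq lsum_image[OF inj1]
  by (rule lsum_singleI[where P="\<lambda>j. i \<notin> insert j I"]) (auto simp: MTm_eq inj_on_def)

lemma X_P: "lsum (MXm i) (Pm (I,J)) = (\<lambda>K. (K \<union> I, insert i (J-K))) ` {K\<in>{K\<in>{K. K \<subseteq> J \<and> card K = 2}. K \<inter> I = {}}. i \<notin> J - K}"
  unfolding Pm_eq lsum_image[OF inj2]
proof (rule lsum_singleI[where P="\<lambda>K. i \<notin> J - K"])
  fix K show "MXm i (K \<union> I, J - K) = (if i \<notin> J - K then {(K \<union> I, insert i (J - K))} else {})"
    by (simp add: MXm_eq)
next
  show "inj_on (\<lambda>K. (K \<union> I, insert i (J - K))) {K \<in> {K\<in>{K. K \<subseteq> J \<and> card K = 2}. K \<inter> I = {}}. i \<notin> J - K}"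
  proof (rule inj_onI)
    fix K K' assume "K \<in> {K \<in> {K\<in>{K. K \<subseteq> J \<and> card K = 2}. K \<inter> I = {}}. i \<notin> J - K}"
      "K' \<in> {K \<in> {K\<in>{K. K \<subseteq> J \<and> card K = 2}. K \<inter> I = {}}. i \<notin> J - K}"
      "(K \<union> I, insert i (J - K)) = (K' \<union> I, insert i (J - K'))"
    then have "K \<subseteq> J" "K' \<subseteq> J" "i \<notin> J - K" "i \<notin> J - K'" "insert i (J - K) = insert i (J - K')" by auto
    then have "K \<subseteq> J" "K' \<subseteq> J" "J - K = J - K'" by (metis Diff_insert_absorb)+
    then show "K = K'" by (rule diff_inj)
  qed
qed

lemma T_P: "lsum (MTm i) (Pm (I,J)) = (\<lambda>K. (insert i (K \<union> I), J-K)) ` {K\<in>{K\<in>{K. K \<subseteq> J \<and> card K = 2}. K \<inter> I = {}}. i \<notin> K \<union> I}"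
  unfolding Pm_eq lsum_image[OF inj2]
proof (rule lsum_singleI[where P="\<lambda>K. i \<notin> K \<union> I"])
  fix K show "MTm i (K \<union> I, J - K) = (if i \<notin> K \<union> I then {(insert i (K \<union> I), J - K)} else {})"
    by (simp add: MTm_eq)
next
  show "inj_on (\<lambda>K. (insert i (K \<union> I), J - K)) {K \<in> {K\<in>{K. K \<subseteq> J \<and> card K = 2}. K \<inter> I = {}}. i \<notin> K \<union> I}"
  proof (rule inj_onI)
    fix K K' assume "K \<in> {K \<in> {K\<in>{K. K \<subseteq> J \<and> card K = 2}. K \<inter> I = {}}. i \<notin> K \<union> I}"
      "K' \<in> {K \<in> {K\<in>{K. K \<subseteq> J \<and> card K = 2}. K \<inter> I = {}}. i \<notin> K \<union> I}"
      "(insert i (K \<union> I), J - K) = (insert i (K' \<union> I), J - K')"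
    then have "K \<subseteq> J" "K' \<subseteq> J" "J - K = J - K'" by auto
    then show "K = K'" by (rule diff_inj)
  qed
qed



lemma radd_self: "radd a a = {}" unfolding radd_def by auto
lemma radd_disj: "a \<inter> b = {} \<Longrightarrow> radd a b = a \<union> b" unfolding radd_def by auto

lemma d1: "lsum Q1m (MXm i (I,J)) = radd (lsum (MXm i) (Q1m (I,J))) (MTm i (I,J))"
proof (cases "i \<in> J")
  case True
  have "lsum (MXm i) (Q1m (I,J)) = MTm i (I,J)"
    unfolding X_Q1 MTm_eq using True by (auto simp: image_iff insert_absorb)
  then show ?thesis using True by (simp add: MXm_eq radd_self)
next
  case False
  show ?thesis using False unfolding MXm_eq X_Q1 MTm_eq
    by (auto simp: radd_def Q1m_eq image_iff)
qed

lemma d2: "lsum Q1m (MTm i (I,J)) = lsum (MTm i) (Q1m (I,J))"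
  unfolding MTm_eq T_Q1 by (auto simp: Q1m_eq image_iff insert_commute)

lemma e1: "lsum exm (MXm i (I,J)) = lsum (MTm i) (exm (I,J))"
  by (simp add: MXm_eq MTm_eq exm_def)
lemma e2: "lsum exm (MTm i (I,J)) = lsum (MXm i) (exm (I,J))"
  by (simp add: MXm_eq MTm_eq exm_def)
lemma e3: "lsum exm (exm w) = {w}"
  by (simp add: exm_def)

lemma d4: "lsum Pm (MTm i (I,J)) = lsum (MTm i) (Pm (I,J))"
  unfolding MTm_eq T_P by (auto simp: Pm_eq image_iff)

lemma d3: "lsum Pm (MXm i (I,J)) = radd (lsum (MXm i) (Pm (I,J))) (lsum (MTm i) (Q1m (I,J)))"
proof (cases "i \<in> J")
  case True
  have "lsum (MXm i) (Pm (I,J)) = lsum (MTm i) (Q1m (I,J))"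
    unfolding X_P T_Q1
  proof (rule set_eqI, rule iffI)
    fix m assume "m \<in> (\<lambda>K. (K \<union> I, insert i (J-K))) ` {K\<in>{K\<in>{K. K \<subseteq> J \<and> card K = 2}. K \<inter> I = {}}. i \<notin> J - K}"
    then obtain K where K: "K \<subseteq> J" "card K = 2" "K \<inter> I = {}" "i \<in> K" "m = (K \<union> I, insert i (J-K))"
      using True by auto
    then obtain j where j: "K = {i,j}" "j \<noteq> i" by (auto simp: card_2_iff)
    show "m \<in> (\<lambda>j. (insert i (insert j I), J-{j})) ` {j\<in>{j\<in>J. j \<notin> I}. i \<notin> insert j I}"
      using K j True by (auto simp: image_iff intro!: bexI[of _ j])
  next
    fix m assume "m \<in> (\<lambda>j. (insert i (insert j I), J-{j})) ` {j\<in>{j\<in>J. j \<notin> I}. i \<notin> insert j I}"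
    then obtain j where j: "j \<in> J" "j \<notin> I" "i \<noteq> j" "i \<notin> I" "m = (insert i (insert j I), J-{j})" by auto
    show "m \<in> (\<lambda>K. (K \<union> I, insert i (J-K))) ` {K\<in>{K\<in>{K. K \<subseteq> J \<and> card K = 2}. K \<inter> I = {}}. i \<notin> J - K}"
    proof (rule image_eqI[where x="{i,j}"])
      show "m = ({i, j} \<union> I, insert i (J - {i, j}))" using j True by auto
      show "{i,j} \<in> {K\<in>{K\<in>{K. K \<subseteq> J \<and> card K = 2}. K \<inter> I = {}}. i \<notin> J - K}"
        using j True by auto
    qed
  qed
  then show ?thesis using True by (simp add: MXm_eq radd_self)
next
  case False
  have "lsum Pm (MXm i (I,J)) = Pm (I, insert i J)" using False by (simp add: MXm_eq)
  also have "\<dots> = lsum (MXm i) (Pm (I,J)) \<union> lsum (MTm i) (Q1m (I,J))"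
    unfolding X_P T_Q1 unfolding Pm_eq
  proof (rule set_eqI, rule iffI)
    fix m assume "m \<in> (\<lambda>K. (K \<union> I, insert i J - K)) ` {K\<in>{K. K \<subseteq> insert i J \<and> card K = 2}. K \<inter> I = {}}"
    then obtain K where K: "K \<subseteq> insert i J" "card K = 2" "K \<inter> I = {}" "m = (K \<union> I, insert i J - K)"
      by auto
    show "m \<in> (\<lambda>K. (K \<union> I, insert i (J-K))) ` {K\<in>{K\<in>{K. K \<subseteq> J \<and> card K = 2}. K \<inter> I = {}}. i \<notin> J - K} \<union>
       (\<lambda>j. (insert i (insert j I), J-{j})) ` {j\<in>{j\<in>J. j \<notin> I}. i \<notin> insert j I}"
    proof (cases "i \<in> K")
      assume iK: "i \<in> K"
      then obtain j where j: "K = {i,j}" "j \<noteq> i" using K by (auto simp: card_2_iff)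
      have "m \<in> (\<lambda>j. (insert i (insert j I), J-{j})) ` {j\<in>{j\<in>J. j \<notin> I}. i \<notin> insert j I}"
      proof (rule image_eqI[where x=j])
        show "m = (insert i (insert j I), J - {j})" using K j False by auto
        show "j \<in> {j\<in>{j\<in>J. j \<notin> I}. i \<notin> insert j I}" using K j False by auto
      qed
      then show ?thesis by blast
    next
      assume ni: "i \<notin> K"
      have "m \<in> (\<lambda>K. (K \<union> I, insert i (J-K))) ` {K\<in>{K\<in>{K. K \<subseteq> J \<and> card K = 2}. K \<inter> I = {}}. i \<notin> J - K}"
      proof (rule image_eqI[where x=K])
        show "m = (K \<union> I, insert i (J - K))" using K ni by auto
        show "K \<in> {K\<in>{K\<in>{K. K \<subseteq> J \<and> card K = 2}. K \<inter> I = {}}. i \<notin> J - K}" using K ni False by auto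
      qed
      then show ?thesis by blast
    qed
  next
    fix m assume "m \<in> (\<lambda>K. (K \<union> I, insert i (J-K))) ` {K\<in>{K\<in>{K. K \<subseteq> J \<and> card K = 2}. K \<inter> I = {}}. i \<notin> J - K} \<union>
       (\<lambda>j. (insert i (insert j I), J-{j})) ` {j\<in>{j\<in>J. j \<notin> I}. i \<notin> insert j I}"
    then show "m \<in> (\<lambda>K. (K \<union> I, insert i J - K)) ` {K\<in>{K. K \<subseteq> insert i J \<and> card K = 2}. K \<inter> I = {}}"
    proof
      assume "m \<in> (\<lambda>K. (K \<union> I, insert i (J-K))) ` {K\<in>{K\<in>{K. K \<subseteq> J \<and> card K = 2}. K \<inter> I = {}}. i \<notin> J - K}"
      then obtain K where K: "K \<subseteq> J" "card K = 2" "K \<inter> I = {}" "m = (K \<union> I, insert i (J-K))" by auto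
      show ?thesis
      proof (rule image_eqI[where x=K])
        show "m = (K \<union> I, insert i J - K)" using K False by auto
      qed (use K in auto)
    next
      assume "m \<in> (\<lambda>j. (insert i (insert j I), J-{j})) ` {j\<in>{j\<in>J. j \<notin> I}. i \<notin> insert j I}"
      then obtain j where j: "j \<in> J" "j \<notin> I" "i \<noteq> j" "i \<notin> I" "m = (insert i (insert j I), J-{j})" by auto
      show ?thesis
      proof (rule image_eqI[where x="{i,j}"])
        show "m = ({i,j} \<union> I, insert i J - {i,j})" using j False by auto
      qed (use j in auto)
    qed
  qed
  also have "\<dots> = radd (lsum (MXm i) (Pm (I,J))) (lsum (MTm i) (Q1m (I,J)))"
    unfolding X_P T_Q1 using False by (intro radd_disj[symmetric]) auto
  finally show ?thesis .
qed


definition good :: "relt \<Rightarrow> bool" where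
  "good v \<longleftrightarrow> finite v \<and> (\<forall>w\<in>v. finite (fst w) \<and> finite (snd w))"

definition MX :: "nat \<Rightarrow> relt \<Rightarrow> relt" where "MX i = lsum (MXm i)"
definition MT :: "nat \<Rightarrow> relt \<Rightarrow> relt" where "MT i = lsum (MTm i)"

lemma good_lsum: assumes "finite A" "\<And>a. a \<in> A \<Longrightarrow> good (F a)" shows "good (lsum F A)"
proof -
  have "finite (\<Union> (F ` A))" using assms by (auto simp: good_def)
  then have f: "finite (lsum F A)" using lsum_subset finite_subset by blast
  have "\<forall>w\<in>lsum F A. finite (fst w) \<and> finite (snd w)"
    using lsum_subset[of F A] assms(2) unfolding good_def by blast
  then show ?thesis using f unfolding good_def by blast
qed

lemma good_radd: "good a \<Longrightarrow> good b \<Longrightarrow> good (radd a b)"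
  unfolding good_def radd_def by auto

lemma good_empty[simp]: "good {}" unfolding good_def by auto

lemma goodD: "good v \<Longrightarrow> finite v" "good v \<Longrightarrow> w \<in> v \<Longrightarrow> finite (fst w)"
   "good v \<Longrightarrow> w \<in> v \<Longrightarrow> finite (snd w)"
  unfolding good_def by auto

lemma good_Q1m: "finite (fst w) \<Longrightarrow> finite (snd w) \<Longrightarrow> good (Q1m w)"
  by (cases w) (auto simp: good_def Q1m_eq)

lemma good_Pm: assumes "finite (fst w)" "finite (snd w)" shows "good (Pm w)"
proof (cases w)
  case (Pair I J)
  have "{K\<in>{K. K \<subseteq> J \<and> card K = 2}. K \<inter> I = {}} \<subseteq> Pow J" by auto
  moreover have "finite J" using assms Pair by simp
  ultimately have "finite {K\<in>{K. K \<subseteq> J \<and> card K = 2}. K \<inter> I = {}}"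
    using finite_subset by blast
  then show ?thesis using assms unfolding Pair good_def Pm_eq
    by (auto intro: finite_subset)
qed

lemma good_exm: "finite (fst w) \<Longrightarrow> finite (snd w) \<Longrightarrow> good (exm w)"
  by (auto simp: good_def exm_def)
lemma good_MXm: "finite (fst w) \<Longrightarrow> finite (snd w) \<Longrightarrow> good (MXm i w)"
  by (cases w) (auto simp: good_def MXm_eq)
lemma good_MTm: "finite (fst w) \<Longrightarrow> finite (snd w) \<Longrightarrow> good (MTm i w)"
  by (cases w) (auto simp: good_def MTm_eq)

lemma good_Q1: "good v \<Longrightarrow> good (Q1 v)"
  unfolding Q1_def lin_def by (rule good_lsum) (auto intro!: good_Q1m goodD)
lemma good_Pop: "good v \<Longrightarrow> good (Pop v)"
  unfolding Pop_def lin_def by (rule good_lsum) (auto intro!: good_Pm goodD)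
lemma good_exch: "good v \<Longrightarrow> good (exch v)"
  unfolding exch_def lin_def by (rule good_lsum) (auto intro!: good_exm goodD)
lemma good_MX: "good v \<Longrightarrow> good (MX i v)"
  unfolding MX_def by (rule good_lsum) (auto intro!: good_MXm goodD)
lemma good_MT: "good v \<Longrightarrow> good (MT i v)"
  unfolding MT_def by (rule good_lsum) (auto intro!: good_MTm goodD)

lemmas good_ops = good_Q1 good_Pop good_exch good_MX good_MT good_radd

lemma lin_radd: "good a \<Longrightarrow> good b \<Longrightarrow> lsum F (radd a b) = radd (lsum F a) (lsum F b)"
  using lsum_radd_arg goodD(1) by blast

lemma Q1_radd: "good a \<Longrightarrow> good b \<Longrightarrow> Q1 (radd a b) = radd (Q1 a) (Q1 b)"
  unfolding Q1_def lin_def by (rule lin_radd)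
lemma Pop_radd: "good a \<Longrightarrow> good b \<Longrightarrow> Pop (radd a b) = radd (Pop a) (Pop b)"
  unfolding Pop_def lin_def by (rule lin_radd)
lemma exch_radd: "good a \<Longrightarrow> good b \<Longrightarrow> exch (radd a b) = radd (exch a) (exch b)"
  unfolding exch_def lin_def by (rule lin_radd)
lemma MX_radd: "good a \<Longrightarrow> good b \<Longrightarrow> MX i (radd a b) = radd (MX i a) (MX i b)"
  unfolding MX_def by (rule lin_radd)
lemma MT_radd: "good a \<Longrightarrow> good b \<Longrightarrow> MT i (radd a b) = radd (MT i a) (MT i b)"
  unfolding MT_def by (rule lin_radd)

lemma ops_empty[simp]: "Q1 {} = {}" "Pop {} = {}" "exch {} = {}" "MX i {} = {}" "MT i {} = {}"
  unfolding Q1_def Pop_def exch_def MX_def MT_def lin_def by simp_all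

lemma comp_fin: "good v \<Longrightarrow> (\<And>w. finite (fst w) \<Longrightarrow> finite (snd w) \<Longrightarrow> good (G w)) \<Longrightarrow>
   lsum F (lsum G v) = lsum (\<lambda>w. lsum F (G w)) v"
  by (rule lsum_comp) (auto dest: goodD simp: good_def)

lemma Q1_MX: assumes "good v" shows "Q1 (MX i v) = radd (MX i (Q1 v)) (MT i v)"
proof -
  have "Q1 (MX i v) = lsum (\<lambda>w. lsum Q1m (MXm i w)) v"
    unfolding Q1_def lin_def MX_def using assms by (rule comp_fin) (rule good_MXm)
  also have "\<dots> = lsum (\<lambda>w. radd (lsum (MXm i) (Q1m w)) (MTm i w)) v"
    by (rule lsum_cong) (metis d1 prod.exhaust)
  also have "\<dots> = radd (lsum (\<lambda>w. lsum (MXm i) (Q1m w)) v) (MT i v)"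
    unfolding MT_def using assms by (simp add: lsum_radd_fun goodD)
  also have "lsum (\<lambda>w. lsum (MXm i) (Q1m w)) v = MX i (Q1 v)"
    unfolding Q1_def lin_def MX_def using assms by (rule comp_fin[symmetric]) (rule good_Q1m)
  finally show ?thesis .
qed

lemma Q1_MT: assumes "good v" shows "Q1 (MT i v) = MT i (Q1 v)"
proof -
  have "Q1 (MT i v) = lsum (\<lambda>w. lsum Q1m (MTm i w)) v"
    unfolding Q1_def lin_def MT_def using assms by (rule comp_fin) (rule good_MTm)
  also have "\<dots> = lsum (\<lambda>w. lsum (MTm i) (Q1m w)) v"
    by (rule lsum_cong) (metis d2 prod.exhaust)
  also have "\<dots> = MT i (Q1 v)"
    unfolding Q1_def lin_def MT_def using assms by (rule comp_fin[symmetric]) (rule good_Q1m)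
  finally show ?thesis .
qed

lemma P_MX: assumes "good v" shows "Pop (MX i v) = radd (MX i (Pop v)) (MT i (Q1 v))"
proof -
  have "Pop (MX i v) = lsum (\<lambda>w. lsum Pm (MXm i w)) v"
    unfolding Pop_def lin_def MX_def using assms by (rule comp_fin) (rule good_MXm)
  also have "\<dots> = lsum (\<lambda>w. radd (lsum (MXm i) (Pm w)) (lsum (MTm i) (Q1m w))) v"
    by (rule lsum_cong) (metis d3 prod.exhaust)
  also have "\<dots> = radd (lsum (\<lambda>w. lsum (MXm i) (Pm w)) v) (lsum (\<lambda>w. lsum (MTm i) (Q1m w)) v)"
    using assms by (simp add: lsum_radd_fun goodD)
  also have "lsum (\<lambda>w. lsum (MXm i) (Pm w)) v = MX i (Pop v)"
    unfolding Pop_def lin_def MX_def using assms by (rule comp_fin[symmetric]) (rule good_Pm)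
  also have "lsum (\<lambda>w. lsum (MTm i) (Q1m w)) v = MT i (Q1 v)"
    unfolding Q1_def lin_def MT_def using assms by (rule comp_fin[symmetric]) (rule good_Q1m)
  finally show ?thesis .
qed

lemma P_MT: assumes "good v" shows "Pop (MT i v) = MT i (Pop v)"
proof -
  have "Pop (MT i v) = lsum (\<lambda>w. lsum Pm (MTm i w)) v"
    unfolding Pop_def lin_def MT_def using assms by (rule comp_fin) (rule good_MTm)
  also have "\<dots> = lsum (\<lambda>w. lsum (MTm i) (Pm w)) v"
    by (rule lsum_cong) (metis d4 prod.exhaust)
  also have "\<dots> = MT i (Pop v)"
    unfolding Pop_def lin_def MT_def using assms by (rule comp_fin[symmetric]) (rule good_Pm)
  finally show ?thesis .
qed

lemma ex_MX: assumes "good v" shows "exch (MX i v) = MT i (exch v)"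
proof -
  have "exch (MX i v) = lsum (\<lambda>w. lsum exm (MXm i w)) v"
    unfolding exch_def lin_def MX_def using assms by (rule comp_fin) (rule good_MXm)
  also have "\<dots> = lsum (\<lambda>w. lsum (MTm i) (exm w)) v"
    by (rule lsum_cong) (metis e1 prod.exhaust)
  also have "\<dots> = MT i (exch v)"
    unfolding exch_def lin_def MT_def using assms by (rule comp_fin[symmetric]) (rule good_exm)
  finally show ?thesis .
qed

lemma ex_MT: assumes "good v" shows "exch (MT i v) = MX i (exch v)"
proof -
  have "exch (MT i v) = lsum (\<lambda>w. lsum exm (MTm i w)) v"
    unfolding exch_def lin_def MT_def using assms by (rule comp_fin) (rule good_MTm)
  also have "\<dots> = lsum (\<lambda>w. lsum (MXm i) (exm w)) v"
    by (rule lsum_cong) (metis e2 prod.exhaust)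
  also have "\<dots> = MX i (exch v)"
    unfolding exch_def lin_def MX_def using assms by (rule comp_fin[symmetric]) (rule good_exm)
  finally show ?thesis .
qed

lemma lsum_id: "lsum (\<lambda>w. {w}) v = v"
proof -
  have "\<And>m. {a\<in>v. m \<in> {a}} = (if m \<in> v then {m} else {})" by auto
  then show ?thesis unfolding lsum_def by auto
qed

lemma ex_ex: assumes "good v" shows "exch (exch v) = v"
proof -
  have "exch (exch v) = lsum (\<lambda>w. lsum exm (exm w)) v"
    unfolding exch_def lin_def using assms by (rule comp_fin) (rule good_exm)
  also have "\<dots> = v" by (simp add: e3 lsum_id)
  finally show ?thesis .
qed

lemma rone_facts: "good rone" "Q1 rone = {}" "Pop rone = {}" "exch rone = rone"
  unfolding rone_def Q1_def Pop_def exch_def lin_def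
  by (auto simp: good_def Q1m_eq Pm_eq exm_def)

lemma rmul_xg: "rmul v (xg i) = MX i v"
proof -
  have e: "v \<times> {({},{i})} = (\<lambda>a. (a, ({},{i}))) ` v" by auto
  have i: "inj_on (\<lambda>a. (a, ({},{i}))) v" by (auto simp: inj_on_def)
  have "lsum (\<lambda>(x, y). mmul x y) (v \<times> {({},{i})}) = lsum (\<lambda>a. (\<lambda>(x, y). mmul x y) (a, ({},{i}))) v"
    unfolding e by (rule lsum_image[OF i])
  then show ?thesis unfolding rmul_def xg_def MX_def MXm_def by simp
qed

lemma rmul_tg: "rmul v (tg i) = MT i v"
proof -
  have e: "v \<times> {({i},{})} = (\<lambda>a. (a, ({i},{}))) ` v" by auto
  have i: "inj_on (\<lambda>a. (a, ({i},{}))) v" by (auto simp: inj_on_def)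
  have "lsum (\<lambda>(x, y). mmul x y) (v \<times> {({i},{})}) = lsum (\<lambda>a. (\<lambda>(x, y). mmul x y) (a, ({i},{}))) v"
    unfolding e by (rule lsum_image[OF i])
  then show ?thesis unfolding rmul_def tg_def MT_def MTm_def by simp
qed



lemma radd_commute: "radd a b = radd b a" unfolding radd_def by auto
lemma radd_assoc: "radd (radd a b) c = radd a (radd b c)" unfolding radd_def by auto
lemma radd_left_commute: "radd a (radd b c) = radd b (radd a c)" unfolding radd_def by auto
lemma radd_empty[simp]: "radd a {} = a" "radd {} a = a" unfolding radd_def by auto
lemma radd_cancel[simp]: "radd a a = {}" "radd a (radd a b) = b" unfolding radd_def by auto
lemmas radd_ac = radd_commute radd_assoc radd_left_commute

definition Inv :: "relt \<Rightarrow> bool" where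
  "Inv b \<longleftrightarrow> good b \<and> Q1 b = Q1 (exch b) \<and> Q1 (exch (Q1 b)) = radd b (exch b)
     \<and> Pop (exch (Q1 b)) = Q1 b \<and> Pop b = {} \<and> Pop (exch b) = {} \<and> Q1 (Q1 b) = {} \<and> Pop (Q1 b) = {}"

lemmas laws = Q1_MX Q1_MT P_MX P_MT ex_MX ex_MT ex_ex Q1_radd Pop_radd exch_radd MX_radd MT_radd

lemma step_c:
  fixes i :: nat and b :: relt
  assumes "Inv b"
  defines "c \<equiv> Q1 (MX i b)"
  shows "good c" "Q1 (exch c) = c" "Pop c = {}" "Pop (exch c) = {}" "Q1 c = {}"
proof -
  have g: "good b" and i1: "Q1 b = Q1 (exch b)" and i2: "Q1 (exch (Q1 b)) = radd b (exch b)"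
    and i3: "Pop (exch (Q1 b)) = Q1 b" and i4: "Pop b = {}" "Pop (exch b) = {}"
    and i5: "Q1 (Q1 b) = {}" "Pop (Q1 b) = {}" using assms(1) unfolding Inv_def by auto
  have c: "c = radd (MX i (Q1 b)) (MT i b)" unfolding c_def using g by (simp add: Q1_MX)
  show "good c" unfolding c using g by (simp add: good_ops)
  have ec: "exch c = radd (MT i (exch (Q1 b))) (MX i (exch b))"
    unfolding c using g by (simp add: laws good_ops)
  show "Q1 (exch c) = c" unfolding ec c using g i1 i2 by (simp add: laws good_ops radd_ac)
  show "Pop c = {}" unfolding c using g i4 i5 by (simp add: laws good_ops radd_ac)
  show "Pop (exch c) = {}" unfolding ec using g i1 i3 i4 by (simp add: laws good_ops radd_ac)
  show "Q1 c = {}" unfolding c using g i5 by (simp add: laws good_ops radd_ac)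
qed

lemma Inv_exch: assumes "Inv b" shows "Inv (exch b)"
  using assms unfolding Inv_def by (auto simp: ex_ex good_exch radd_commute)

lemma step:
  fixes i j :: nat and b :: relt
  assumes "Inv b"
  defines "c \<equiv> Q1 (MX i b)"
  shows "Inv (MX j c)"
proof -
  note s = step_c[OF assms(1), of i, folded c_def]
  have g: "good c" using s by simp
  show ?thesis unfolding Inv_def using g s by (simp add: laws good_ops radd_ac)
qed



lemma Bev_inv: "b \<in> Bev t \<Longrightarrow> Inv b \<and> exch b \<in> Bev t"
proof (induction t arbitrary: b)
  case 0
  then show ?case using rone_facts unfolding Inv_def by auto
next
  case (Suc t)
  let ?i = "2*t+1" and ?j = "2*t+2"
  from Suc.prems obtain b0 where b0: "b0 \<in> Bev t" and
    cases: "b = MX ?j (Q1 (MX ?i b0)) \<or> b = MT ?j (exch (Q1 (MX ?i b0)))"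
    by (auto simp: rmul_xg rmul_tg)
  have I0: "Inv b0" using Suc.IH b0 by blast
  define c where "c = Q1 (MX ?i b0)"
  have gc: "good c" using step_c(1)[OF I0] c_def by simp
  have I1: "Inv (MX ?j c)" using step[OF I0] c_def by simp
  have e1: "exch (MX ?j c) = MT ?j (exch c)" using gc by (simp add: ex_MX)
  have e2: "exch (MT ?j (exch c)) = MX ?j c" using e1 gc by (metis ex_ex good_MX)
  have m1: "MX ?j c \<in> Bev (Suc t)" using b0 unfolding c_def by (auto simp: rmul_xg rmul_tg)
  have m2: "MT ?j (exch c) \<in> Bev (Suc t)" using b0 unfolding c_def by (auto simp: rmul_xg rmul_tg)
  from cases show ?case
  proof
    assume "b = MX ?j (Q1 (MX ?i b0))"
    then show ?thesis using I1 e1 m2 c_def by simp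
  next
    assume "b = MT ?j (exch (Q1 (MX ?i b0)))"
    then show ?thesis using Inv_exch[OF I1] e1 e2 m1 c_def by simp
  qed
qed

theorem mainTheorem10:
  fixes t :: nat and b :: relt
  assumes "b \<in> B (2*t)"
  shows "exch b \<in> B (2*t)
    \<and> Q1 b = Q1 (exch b)
    \<and> Q1 (exch (Q1 b)) = radd b (exch b)
    \<and> Pop (exch (Q1 b)) = Q1 b
    \<and> Pop b = {} \<and> Pop (exch b) = {}
    \<and> Q1 (exch (Q1 (rmul b (xg (2*t+1))))) = Q1 (rmul b (xg (2*t+1)))
    \<and> Pop (Q1 (rmul b (xg (2*t+1)))) = {}
    \<and> Pop (exch (Q1 (rmul b (xg (2*t+1))))) = {}"
proof -
  have bt: "B (2*t) = Bev t" unfolding B_def by simp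
  have b: "b \<in> Bev t" using assms bt by simp
  have I: "Inv b" and e: "exch b \<in> Bev t" using Bev_inv[OF b] by auto
  note s = step_c[OF I, of "2*t+1"]
  have e': "exch b \<in> B (2*t)" using e bt by simp
  show ?thesis using I e' s unfolding Inv_def rmul_xg by blast
qed

end
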